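(* Let $\mathbf X\sim\mathcal N(\mathbf 0,\boldsymbol\Sigma)$ in $\mathbb R^d$ with $\boldsymbol\Sigma$ positive definite, eigenvalues $\lambda_1\ge\cdots\ge\lambda_d>0$ and orthonormal eigenvectors $v_1,\dots,v_d$; let $\mathbf V=(v_1,\dots,v_d)$ and $\mathbf Y=\mathbf V'\mathbf X$. For $\alpha\in(0,1)$ and $i\in\{1,\dots,d\}$ let $\boldsymbol\Lambda_{i,\alpha}:=\mathrm{Cov}(\mathbf Y\mid Y_i\in\mathsf T^\alpha_{Y_i})$. Then $\mathrm{Tr}(\boldsymbol\Lambda_{1,\alpha})\le\mathrm{Tr}(\boldsymbol\Lambda_{i,\alpha})\le\mathrm{Tr}(\boldsymbol\Lambda_{d,\alpha})$ for all $i$; i.e. the preserved total variance is maximized by peeling $Y_d$ and minimized by peeling $Y_1$.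
   Context: For a real random variable $W$, $Q_W(p)=\inf\{x:\mathbb P(W\le x)\ge p\}$ is its $p$-quantile and $\mathsf T^\alpha_W:=[Q_W(\alpha/2),Q_W(1-\alpha/2)]$. *)

theory Defs
  imports "HOL-Probability.Probability"
begin

definition mvn_density :: "real^'n^'n \<Rightarrow> real^'n \<Rightarrow> real" where
  "mvn_density S x =
     exp (- (x \<bullet> (matrix_inv S *v x)) / 2) / sqrt ((2 * pi) ^ CARD('n) * det S)"

definition quantile :: "'a measure \<Rightarrow> ('a \<Rightarrow> real) \<Rightarrow> real \<Rightarrow> real" where
  "quantile M W p = Inf {x. measure M {\<omega> \<in> space M. W \<omega> \<le> x} \<ge> p}"

definition central_interval :: "'a measure \<Rightarrow> ('a \<Rightarrow> real) \<Rightarrow> real \<Rightarrow> real set" where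
  "central_interval M W \<alpha> = {quantile M W (\<alpha>/2) .. quantile M W (1 - \<alpha>/2)}"

definition cond_expect :: "'a measure \<Rightarrow> 'a set \<Rightarrow> ('a \<Rightarrow> real) \<Rightarrow> real" where
  "cond_expect M A f = (\<integral>\<omega>. indicator A \<omega> * f \<omega> \<partial>M) / measure M A"

definition cond_cov :: "'a measure \<Rightarrow> 'a set \<Rightarrow> ('a \<Rightarrow> real) \<Rightarrow> ('a \<Rightarrow> real) \<Rightarrow> real" where
  "cond_cov M A f g =
     cond_expect M A (\<lambda>\<omega>. (f \<omega> - cond_expect M A f) * (g \<omega> - cond_expect M A g))"

definition cond_cov_matrix :: "'a measure \<Rightarrow> 'a set \<Rightarrow> (nat \<Rightarrow> 'a \<Rightarrow> real) \<Rightarrow> nat \<Rightarrow> nat \<Rightarrow> real" where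
  "cond_cov_matrix M A Y j k = cond_cov M A (Y j) (Y k)"

definition mat_trace :: "nat \<Rightarrow> (nat \<Rightarrow> nat \<Rightarrow> real) \<Rightarrow> real" where
  "mat_trace d L = (\<Sum>j=1..d. L j j)"

end

theory Submission
  imports Defs
begin


lemma distr_orth_wellorder:
  fixes T :: "real^'m::{finite,wellorder} \<Rightarrow> real^'m::_"
  assumes T: "orthogonal_transformation T"
  shows "distr lborel borel T = lborel"
proof (rule lborel_eqI[symmetric])
  fix l u :: "real^'m::_" assume le: "\<And>b. b \<in> Basis \<Longrightarrow> l \<bullet> b \<le> u \<bullet> b"
  have lin: "linear T" using T by (rule orthogonal_transformation_linear)
  have cT: "continuous_on UNIV T" using lin by (simp add: linear_continuous_on linear_linear)
  have mT[measurable]: "T \<in> borel_measurable borel" using cT by (rule borel_measurable_continuous_onI)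
  have Ti: "orthogonal_transformation (inv T)" using T by (rule orthogonal_transformation_inv)
  have bij: "bij T" using T by (rule orthogonal_transformation_bij)
  have eq: "T -` box l u = inv T ` box l u"
    using bij by (simp add: bij_vimage_eq_inv_image)
  have lm: "box l u \<in> lmeasurable" by simp
  have m1: "inv T ` box l u \<in> lmeasurable" and m2: "measure lebesgue (inv T ` box l u) = measure lebesgue (box l u)"
    using measurable_orthogonal_image[OF Ti lm] measure_orthogonal_image[OF Ti lm] by auto
  have op: "open (T -` box l u)" using lin by (intro continuous_open_vimage open_box linear_continuous_at) (simp add: linear_conv_bounded_linear)
  then have bor: "T -` box l u \<in> sets lborel" by simp
  have "emeasure (distr lborel borel T) (box l u) = emeasure lborel (T -` box l u)"
    by (simp add: emeasure_distr)
  also have "\<dots> = emeasure lebesgue (T -` box l u)" using bor by simp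
  also have "\<dots> = ennreal (measure lebesgue (T -` box l u))"
    unfolding eq by (rule emeasure_eq_measure2[OF m1])
  also have "\<dots> = ennreal (measure lebesgue (box l u))" using m2 eq by simp
  also have "\<dots> = (\<Prod>b\<in>Basis. (u - l) \<bullet> b)" using le by (simp add: measure_lborel_box_eq)
  finally show "emeasure (distr lborel borel T) (box l u) = (\<Prod>b\<in>Basis. (u - l) \<bullet> b)" .
qed simp


lemma Basis_real_vec: "(Basis :: (real^'n) set) = range (\<lambda>i. axis i 1)"
  by (auto simp: Basis_vec_def)

lemma inj_axis1: "inj (\<lambda>i::'n::finite. axis i (1::real))"
  by (auto intro: injI simp: axis_eq_axis)

lemma prod_Basis_vec: "(\<Prod>b\<in>(Basis::(real^'n) set). f b) = (\<Prod>i\<in>UNIV. f (axis i 1))"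
  by (simp add: Basis_real_vec prod.reindex inj_axis1)

lemma emeasure_lborel_box_vec:
  fixes l u :: "real^'n"
  shows "emeasure lborel (box l u) = (if \<forall>i. l$i \<le> u$i then ennreal (\<Prod>i\<in>UNIV. u$i - l$i) else 0)"
  by (simp only: emeasure_lborel_box_eq prod_Basis_vec) (simp add: Basis_real_vec cart_eq_inner_axis[symmetric] inner_diff_left)

lemma card_sum_UNIV: "card (UNIV :: ('a::finite + 'b::finite) set) = CARD('a) + CARD('b)"
proof -
  have "card (UNIV :: ('a + 'b) set) = card (Inl ` (UNIV::'a set) \<union> Inr ` (UNIV::'b set))"
    by (simp add: UNIV_sum[symmetric])
  also have "\<dots> = CARD('a) + CARD('b)"
    by (subst card_Un_disjoint) (auto simp: card_image)
  finally show ?thesis .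
qed


lemma distr_orth:
  fixes U :: "real^'n \<Rightarrow> real^'n"
  assumes U: "orthogonal_transformation U"
  shows "distr lborel borel U = lborel"
proof -
  have "card (UNIV :: 'n bit0 set) = card (UNIV :: ('n + 'n) set)"
    by (simp add: card_sum_UNIV)
  then obtain g :: "'n bit0 \<Rightarrow> 'n + 'n" where g: "bij_betw g UNIV UNIV"
    using finite_same_card_bij[of "UNIV :: 'n bit0 set" "UNIV :: ('n + 'n) set"] by auto
  have gb: "bij g" using g by (simp add: bij_betw_def bij_def)
  define h where "h = inv g"
  have hg: "h (g i) = i" for i using gb by (simp add: h_def bij_is_inj)
  have gh: "g (h s) = s" for s using gb by (simp add: h_def bij_is_surj surj_f_inv_f)
  define E :: "(real^'n) \<times> (real^'n) \<Rightarrow> real^'n bit0" where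
    "E p = (\<chi> i. case g i of Inl a \<Rightarrow> fst p $ a | Inr a \<Rightarrow> snd p $ a)" for p
  define E' :: "real^'n bit0 \<Rightarrow> (real^'n) \<times> (real^'n)" where
    "E' z = ((\<chi> a. z $ h (Inl a)), (\<chi> a. z $ h (Inr a)))" for z
  have EE': "E (E' z) = z" for z
    unfolding E_def E'_def by (auto simp: vec_eq_iff hg split: sum.split dest: arg_cong[where f=h])
  have E'E: "E' (E p) = p" for p
    unfolding E_def E'_def by (auto simp: vec_eq_iff gh prod_eq_iff)
  have linE: "linear E"
    unfolding E_def by (intro linearI) (auto simp: vec_eq_iff split: sum.split)
  have linE': "linear E'"
    unfolding E'_def by (intro linearI) (auto simp: vec_eq_iff)
  have sumg: "(\<Sum>i\<in>UNIV. f (g i)) = (\<Sum>a\<in>UNIV. f (Inl a)) + (\<Sum>a\<in>UNIV. f (Inr a))" for f :: "'n + 'n \<Rightarrow> real"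
  proof -
    have "(\<Sum>i\<in>UNIV. f (g i)) = (\<Sum>s\<in>UNIV. f s)"
      using sum.reindex_bij_betw[OF g, of f] by simp
    also have "\<dots> = (\<Sum>s\<in>Inl ` UNIV \<union> Inr ` UNIV. f s)" by (simp add: UNIV_sum[symmetric])
    also have "\<dots> = (\<Sum>a\<in>UNIV. f (Inl a)) + (\<Sum>a\<in>UNIV. f (Inr a))"
      by (subst sum.union_disjoint) (auto simp: sum.reindex)
    finally show ?thesis .
  qed
  have prodg: "(\<Prod>i\<in>UNIV. f (g i)) = (\<Prod>a\<in>UNIV. f (Inl a)) * (\<Prod>a\<in>UNIV. f (Inr a))" for f :: "'n + 'n \<Rightarrow> real"
  proof -
    have "(\<Prod>i\<in>UNIV. f (g i)) = (\<Prod>s\<in>UNIV. f s)"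
      using prod.reindex_bij_betw[OF g, of f] by simp
    also have "\<dots> = (\<Prod>s\<in>Inl ` UNIV \<union> Inr ` UNIV. f s)" by (simp add: UNIV_sum[symmetric])
    also have "\<dots> = (\<Prod>a\<in>UNIV. f (Inl a)) * (\<Prod>a\<in>UNIV. f (Inr a))"
      by (subst prod.union_disjoint) (auto simp: prod.reindex)
    finally show ?thesis .
  qed
  have innerE: "E p \<bullet> E q = fst p \<bullet> fst q + snd p \<bullet> snd q" for p q
  proof -
    have "E p \<bullet> E q = (\<Sum>i\<in>UNIV. (case g i of Inl a \<Rightarrow> fst p $ a * fst q $ a | Inr a \<Rightarrow> snd p $ a * snd q $ a))"
      unfolding E_def inner_vec_def by (intro sum.cong) (auto split: sum.split)
    also have "\<dots> = fst p \<bullet> fst q + snd p \<bullet> snd q"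
      by (subst sumg[where f="\<lambda>s. case s of Inl a \<Rightarrow> fst p $ a * fst q $ a | Inr a \<Rightarrow> snd p $ a * snd q $ a"])
         (simp add: inner_vec_def)
    finally show ?thesis .
  qed
  have mE[measurable]: "E \<in> borel_measurable borel"
    using linE by (intro borel_measurable_continuous_onI linear_continuous_on) (simp add: linear_conv_bounded_linear)
  have mE'[measurable]: "E' \<in> borel_measurable borel"
    using linE' by (intro borel_measurable_continuous_onI linear_continuous_on) (simp add: linear_conv_bounded_linear)
  have boxE: "E -` box l u = box (fst (E' l)) (fst (E' u)) \<times> box (snd (E' l)) (snd (E' u))" for l u
  proof -
    have "E p \<in> box l u \<longleftrightarrow> p \<in> box (fst (E' l)) (fst (E' u)) \<times> box (snd (E' l)) (snd (E' u))" for p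
    proof -
      have "E p \<in> box l u \<longleftrightarrow> (\<forall>i. l $ i < E p $ i \<and> E p $ i < u $ i)" by (simp add: mem_box_cart)
      also have "\<dots> \<longleftrightarrow> (\<forall>s. l $ h s < E p $ h s \<and> E p $ h s < u $ h s)"
        by (metis hg)
      also have "\<dots> \<longleftrightarrow> p \<in> box (fst (E' l)) (fst (E' u)) \<times> box (snd (E' l)) (snd (E' u))"
        unfolding E_def E'_def by (auto simp: mem_box_cart gh mem_Times_iff split_sum_all split: sum.split)
      finally show ?thesis .
    qed
    then show ?thesis by auto
  qed
  have stepA: "distr lborel borel E = lborel"
  proof (rule lborel_eqI[symmetric])
    fix l u :: "real^'n bit0" assume le: "\<And>b. b \<in> Basis \<Longrightarrow> l \<bullet> b \<le> u \<bullet> b"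
    then have le': "l $ i \<le> u $ i" for i
      by (metis axis_in_Basis_iff cart_eq_inner_axis Basis_real_def insertI1)
    have "emeasure (distr lborel borel E) (box l u) = emeasure lborel (E -` box l u)"
      by (simp add: emeasure_distr)
    also have "\<dots> = emeasure (lborel \<Otimes>\<^sub>M lborel) (box (fst (E' l)) (fst (E' u)) \<times> box (snd (E' l)) (snd (E' u)))"
      by (simp add: boxE lborel_prod)
    also have "\<dots> = emeasure lborel (box (fst (E' l)) (fst (E' u))) * emeasure lborel (box (snd (E' l)) (snd (E' u)))"
      by (simp add: lborel.emeasure_pair_measure_Times)
    also have "\<dots> = ennreal ((\<Prod>a\<in>UNIV. u $ h (Inl a) - l $ h (Inl a)) * (\<Prod>a\<in>UNIV. u $ h (Inr a) - l $ h (Inr a)))"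
      using le' by (simp add: emeasure_lborel_box_vec E'_def ennreal_mult prod_nonneg)
    also have "\<dots> = ennreal (\<Prod>i\<in>UNIV. u $ h (g i) - l $ h (g i))"
      by (subst prodg[where f="\<lambda>s. u $ h s - l $ h s"]) simp
    also have "\<dots> = (\<Prod>b\<in>Basis. (u - l) \<bullet> b)"
      by (simp add: hg prod_Basis_vec cart_eq_inner_axis[symmetric])
    finally show "emeasure (distr lborel borel E) (box l u) = (\<Prod>b\<in>Basis. (u - l) \<bullet> b)" .
  qed simp
  define T where "T z = E (U (fst (E' z)), snd (E' z))" for z
  have linU: "linear U" using U by (rule orthogonal_transformation_linear)
  have oT: "orthogonal_transformation T"
    unfolding orthogonal_transformation_def
  proof (intro conjI allI)
    have "linear (\<lambda>p::(real^'n)\<times>(real^'n). (U (fst p), snd p))"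
      using linU by (intro linearI) (auto simp: linear_add linear_scale)
    then have "linear (E \<circ> (\<lambda>p. (U (fst p), snd p)) \<circ> E')"
      using linE linE' by (intro linear_compose)
    moreover have "T = (\<lambda>z. E (U (fst (E' z)), snd (E' z)))" by (rule ext) (simp add: T_def)
    ultimately show "linear T" by (simp add: o_def)
    fix v w
    have "T v \<bullet> T w = U (fst (E' v)) \<bullet> U (fst (E' w)) + snd (E' v) \<bullet> snd (E' w)"
      by (simp add: T_def innerE)
    also have "\<dots> = fst (E' v) \<bullet> fst (E' w) + snd (E' v) \<bullet> snd (E' w)"
      using U by (simp add: orthogonal_transformation_def)
    also have "\<dots> = E (E' v) \<bullet> E (E' w)" by (simp add: innerE)
    finally show "T v \<bullet> T w = v \<bullet> w" by (simp add: EE')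
  qed
  have dT: "distr lborel borel T = lborel" by (rule distr_orth_wellorder[OF oT])
  have mT[measurable]: "T \<in> borel_measurable borel"
    using orthogonal_transformation_linear[OF oT] by (intro borel_measurable_continuous_onI linear_continuous_on) (simp add: linear_conv_bounded_linear)
  have key: "emeasure lborel (A \<times> B) = emeasure lborel (E' -` (A \<times> B))" if "A \<in> sets borel" "B \<in> sets borel" for A B :: "(real^'n) set"
  proof -
    have AB: "A \<times> B \<in> sets borel" using pair_measureI[OF that] unfolding borel_prod .
    have meas: "E' -` (A \<times> B) \<in> sets borel"
      using measurable_sets_borel[OF mE' AB] by simp
    have "emeasure lborel (E' -` (A \<times> B)) = emeasure (distr lborel borel E) (E' -` (A \<times> B))"
      by (simp add: stepA)
    also have "\<dots> = emeasure lborel (E -` (E' -` (A \<times> B)))"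
      using meas by (simp add: emeasure_distr)
    also have "E -` (E' -` (A \<times> B)) = A \<times> B" by (auto simp: E'E)
    finally show ?thesis by simp
  qed
  have mU[measurable]: "U \<in> borel_measurable borel"
    using linU by (intro borel_measurable_continuous_onI linear_continuous_on) (simp add: linear_conv_bounded_linear)
  show ?thesis
  proof (rule lborel_eqI[symmetric])
    fix l u :: "real^'n" assume le: "\<And>b. b \<in> Basis \<Longrightarrow> l \<bullet> b \<le> u \<bullet> b"
    define C :: "(real^'n) set" where "C = box 0 One"
    have C1: "emeasure lborel C = 1"
      by (simp add: C_def emeasure_lborel_box_eq)
    have Cb: "C \<in> sets borel" by (simp add: C_def)
    define S where "S = U -` box l u"
    have Sb: "S \<in> sets borel" unfolding S_def using measurable_sets_borel[OF mU, of "box l u"] by simp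
    have Bb: "box l u \<in> sets borel" by simp
    have BC: "box l u \<times> C \<in> sets borel" using pair_measureI[OF Bb Cb] unfolding borel_prod .
    have mBC: "E' -` (box l u \<times> C) \<in> sets borel" using measurable_sets_borel[OF mE' BC] by simp
    have "emeasure (distr lborel borel U) (box l u) = emeasure lborel S"
      by (simp add: emeasure_distr S_def)
    also have "\<dots> = emeasure lborel S * emeasure lborel C" by (simp add: C1)
    also have "\<dots> = emeasure lborel (S \<times> C)"
      using Sb Cb by (simp add: lborel_prod[symmetric] lborel.emeasure_pair_measure_Times)
    also have "\<dots> = emeasure lborel (E' -` (S \<times> C))" by (rule key[OF Sb Cb])
    also have "E' -` (S \<times> C) = T -` (E' -` (box l u \<times> C))"
      by (auto simp: T_def S_def E'E mem_Times_iff)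
    also have "emeasure lborel (T -` (E' -` (box l u \<times> C))) = emeasure (distr lborel borel T) (E' -` (box l u \<times> C))"
      using mBC by (subst emeasure_distr) auto
    also have "\<dots> = emeasure lborel (E' -` (box l u \<times> C))" by (simp add: dT)
    also have "\<dots> = emeasure lborel (box l u \<times> C)" by (rule key[OF Bb Cb, symmetric])
    also have "\<dots> = emeasure lborel (box l u) * emeasure lborel C"
      using Bb Cb by (simp add: lborel_prod[symmetric] lborel.emeasure_pair_measure_Times)
    also have "\<dots> = (\<Prod>b\<in>Basis. (u - l) \<bullet> b)" using le by (simp add: C1 emeasure_lborel_box_eq)
    finally show "emeasure (distr lborel borel U) (box l u) = (\<Prod>b\<in>Basis. (u - l) \<bullet> b)" .
  qed simp
qed




lemma card_Basis_vec: "card (Basis :: (real^'n) set) = CARD('n)"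
  using DIM_cart[where 'a=real and 'b='n] by simp

lemma master:
  fixes M :: "'a measure" and X :: "'a \<Rightarrow> real^'n" and \<Sigma> :: "real^'n^'n"
    and lam :: "nat \<Rightarrow> real" and v :: "nat \<Rightarrow> real^'n" and A :: "nat \<Rightarrow> real set"
  assumes P: "prob_space M"
    and posdef: "\<And>x. x \<noteq> 0 \<Longrightarrow> x \<bullet> (\<Sigma> *v x) > 0"
    and gauss: "distributed M lborel X (\<lambda>x. ennreal (mvn_density \<Sigma> x))"
    and eigen: "\<And>j. j \<in> {1..CARD('n)} \<Longrightarrow> \<Sigma> *v v j = lam j *\<^sub>R v j"
    and orth: "\<And>j k. j \<in> {1..CARD('n)} \<Longrightarrow> k \<in> {1..CARD('n)} \<Longrightarrow> v j \<bullet> v k = (if j = k then 1 else 0)"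
    and pos: "\<And>j. j \<in> {1..CARD('n)} \<Longrightarrow> lam j > 0"
    and Ab: "\<And>j. j \<in> {1..CARD('n)} \<Longrightarrow> A j \<in> sets borel"
  shows "emeasure M {\<omega> \<in> space M. \<forall>j\<in>{1..CARD('n)}. v j \<bullet> X \<omega> \<in> A j}
     = (\<Prod>j\<in>{1..CARD('n)}. emeasure (density lborel (\<lambda>t. ennreal (normal_density 0 (sqrt (lam j)) t))) (A j))"
proof -
  define I where "I = {1..CARD('n)}"
  have finI: "finite I" by (simp add: I_def)
  have "card I = card (Basis :: (real^'n) set)" by (simp add: I_def card_Basis_vec)
  then obtain \<beta> where \<beta>: "bij_betw \<beta> I (Basis :: (real^'n) set)"
    using finite_same_card_bij[OF finI, of "Basis :: (real^'n) set"] by auto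
  define \<gamma> where "\<gamma> = inv_into I \<beta>"
  have \<gamma>\<beta>: "\<gamma> (\<beta> j) = j" if "j \<in> I" for j
    using \<beta> that by (simp add: \<gamma>_def bij_betw_def inv_into_f_f)
  have \<gamma>I: "\<gamma> b \<in> I" if "b \<in> Basis" for b
    using \<beta> that by (simp add: \<gamma>_def bij_betw_def inv_into_into)
  define U where "U w = (\<Sum>j\<in>I. (w \<bullet> \<beta> j) *\<^sub>R v j)" for w :: "real^'n"
  have Uv: "v k \<bullet> U w = w \<bullet> \<beta> k" if "k \<in> I" for k w
  proof -
    have "v k \<bullet> U w = (\<Sum>j\<in>I. (w \<bullet> \<beta> j) * (v k \<bullet> v j))"
      by (simp add: U_def inner_sum_right)
    also have "\<dots> = (\<Sum>j\<in>I. if j = k then w \<bullet> \<beta> j else 0)"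
      using that by (intro sum.cong) (auto simp: orth I_def)
    also have "\<dots> = w \<bullet> \<beta> k" using that finI by simp
    finally show ?thesis .
  qed
  have linU: "linear U"
    unfolding U_def by (intro linearI) (simp_all add: inner_add_left scaleR_add_left sum.distrib scaleR_sum_right)
  have innU: "U w \<bullet> U w' = w \<bullet> w'" for w w'
  proof -
    have "U w \<bullet> U w' = (\<Sum>j\<in>I. (w \<bullet> \<beta> j) * (v j \<bullet> U w'))"
      by (simp add: U_def inner_sum_left)
    also have "\<dots> = (\<Sum>j\<in>I. (w \<bullet> \<beta> j) * (w' \<bullet> \<beta> j))"
      by (intro sum.cong) (simp_all add: Uv)
    also have "\<dots> = (\<Sum>b\<in>Basis. (w \<bullet> b) * (w' \<bullet> b))"
      using sum.reindex_bij_betw[OF \<beta>, of "\<lambda>b. (w \<bullet> b) * (w' \<bullet> b)"] by simp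
    also have "\<dots> = w \<bullet> w'" by (simp add: euclidean_inner[symmetric])
    finally show ?thesis .
  qed
  have oU: "orthogonal_transformation U"
    using linU innU by (simp add: orthogonal_transformation_def)
  have dU: "distr lborel borel U = lborel" by (rule distr_orth[OF oU])
  have mU[measurable]: "U \<in> borel_measurable borel"
    using linU by (intro borel_measurable_continuous_onI linear_continuous_on) (simp add: linear_conv_bounded_linear)
  have ker: "\<forall>x. \<Sigma> *v x = 0 \<longrightarrow> x = 0"
    using posdef by (metis inner_zero_right less_irrefl)
  then obtain B where "B ** \<Sigma> = mat 1" using matrix_left_invertible_ker by blast
  then have "invertible \<Sigma>" using invertible_left_inverse by blast
  then have "\<Sigma> ** matrix_inv \<Sigma> = mat 1 \<and> matrix_inv \<Sigma> ** \<Sigma> = mat 1"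
    unfolding invertible_def matrix_inv_def by (rule someI_ex)
  then have invS: "matrix_inv \<Sigma> *v (\<Sigma> *v x) = x" for x
    by (simp add: matrix_vector_mul_assoc)
  have Sinv: "matrix_inv \<Sigma> *v v j = (1 / lam j) *\<^sub>R v j" if "j \<in> I" for j
  proof -
    have "v j = matrix_inv \<Sigma> *v (lam j *\<^sub>R v j)" using invS[of "v j"] eigen[of j] that by (simp add: I_def)
    also have "\<dots> = lam j *\<^sub>R (matrix_inv \<Sigma> *v v j)" by (simp add: matrix_vector_mult_scaleR)
    finally have e: "v j = lam j *\<^sub>R (matrix_inv \<Sigma> *v v j)" .
    have nz: "lam j \<noteq> 0" using pos[of j] that by (simp add: I_def)
    have "(1 / lam j) *\<^sub>R v j = (1 / lam j) *\<^sub>R (lam j *\<^sub>R (matrix_inv \<Sigma> *v v j))"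
      using e by simp
    then show ?thesis using nz by simp
  qed
  have quad: "U w \<bullet> (matrix_inv \<Sigma> *v U w) = (\<Sum>j\<in>I. (w \<bullet> \<beta> j)^2 / lam j)" for w
  proof -
    have "matrix_inv \<Sigma> *v U w = (\<Sum>j\<in>I. ((w \<bullet> \<beta> j) / lam j) *\<^sub>R v j)"
      unfolding U_def
      by (simp add: linear_sum[OF matrix_vector_mul_linear] matrix_vector_mult_scaleR Sinv o_def cong: sum.cong)
    then have "U w \<bullet> (matrix_inv \<Sigma> *v U w) = (\<Sum>j\<in>I. ((w \<bullet> \<beta> j) / lam j) * (v j \<bullet> U w))"
      by (simp add: inner_sum_right inner_commute)
    also have "\<dots> = (\<Sum>j\<in>I. (w \<bullet> \<beta> j)^2 / lam j)"
      by (intro sum.cong) (simp_all add: Uv power2_eq_square)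
    finally show ?thesis .
  qed
  define \<phi> where "\<phi> j t = normal_density 0 (sqrt (lam j)) t" for j t
  define K where "K = (\<Prod>j\<in>I. sqrt (2 * pi * lam j)) / sqrt ((2 * pi) ^ CARD('n) * det \<Sigma>)"
  have fU: "mvn_density \<Sigma> (U w) = K * (\<Prod>j\<in>I. \<phi> j (w \<bullet> \<beta> j))" for w
  proof -
    have lampos: "j \<in> I \<Longrightarrow> 0 < lam j" for j using pos by (simp add: I_def)
    have "(\<Prod>j\<in>I. \<phi> j (w \<bullet> \<beta> j)) = (\<Prod>j\<in>I. exp (- ((w \<bullet> \<beta> j)^2 / lam j) / 2) / sqrt (2 * pi * lam j))"
      by (intro prod.cong) (simp_all add: \<phi>_def normal_density_def lampos less_imp_le)
    also have "\<dots> = exp (- (\<Sum>j\<in>I. (w \<bullet> \<beta> j)^2 / lam j) / 2) / (\<Prod>j\<in>I. sqrt (2 * pi * lam j))"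
    proof -
      have "exp (- (\<Sum>j\<in>I. (w \<bullet> \<beta> j)^2 / lam j) / 2) = exp (\<Sum>j\<in>I. - ((w \<bullet> \<beta> j)^2 / lam j) / 2)"
        by (simp add: sum_divide_distrib sum_negf)
      also have "\<dots> = (\<Prod>j\<in>I. exp (- ((w \<bullet> \<beta> j)^2 / lam j) / 2))"
        using finI by (rule exp_sum)
      finally show ?thesis by (simp add: prod_dividef)
    qed
    finally have *: "(\<Prod>j\<in>I. \<phi> j (w \<bullet> \<beta> j)) = exp (- (\<Sum>j\<in>I. (w \<bullet> \<beta> j)^2 / lam j) / 2) / (\<Prod>j\<in>I. sqrt (2 * pi * lam j))" .
    have nz: "(\<Prod>j\<in>I. sqrt (2 * pi * lam j)) \<noteq> 0"
      using lampos finI by (force simp: prod_zero_iff)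
    show ?thesis
      unfolding * K_def mvn_density_def quad using nz by (simp add: field_simps)
  qed
  have lampos: "j \<in> I \<Longrightarrow> 0 < lam j" for j using pos by (simp add: I_def)
  have Ine: "I \<noteq> {}" by (simp add: I_def)
  have mf[measurable]: "(\<lambda>x. ennreal (mvn_density \<Sigma> x)) \<in> borel_measurable borel"
    using distributed_borel_measurable[OF gauss] by simp
  have mX: "X \<in> measurable M lborel" using distributed_measurable[OF gauss] .
  have GF: "emeasure M {\<omega> \<in> space M. \<forall>j\<in>I. v j \<bullet> X \<omega> \<in> A' j}
      = ennreal K * (\<Prod>j\<in>I. emeasure (density lborel (\<lambda>t. ennreal (\<phi> j t))) (A' j))"
    if A'b: "\<And>j. j \<in> I \<Longrightarrow> A' j \<in> sets borel" for A'
  proof -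
    define Bs where "Bs = (\<Inter>j\<in>I. (\<lambda>x. v j \<bullet> x) -` A' j \<inter> space borel)"
    have Bb: "Bs \<in> sets borel" unfolding Bs_def
    proof (rule sets.finite_INT[OF finI Ine])
      fix j assume "j \<in> I"
      have "(\<lambda>x. v j \<bullet> x) \<in> borel_measurable borel" by measurable
      then show "(\<lambda>x. v j \<bullet> x) -` A' j \<inter> space borel \<in> sets borel"
        using A'b[OF \<open>j \<in> I\<close>] by (rule measurable_sets)
    qed
    have Bmem: "x \<in> Bs \<longleftrightarrow> (\<forall>j\<in>I. v j \<bullet> x \<in> A' j)" for x
      using Ine by (auto simp: Bs_def)
    define H where "H j t = ennreal (\<phi> j t) * indicator (A' j) t" for j t
    have mH: "H j \<in> borel_measurable borel" if "j \<in> I" for j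
    proof -
      have [measurable]: "A' j \<in> sets borel" using A'b that .
      show ?thesis unfolding H_def \<phi>_def by measurable
    qed
    have "emeasure M {\<omega> \<in> space M. \<forall>j\<in>I. v j \<bullet> X \<omega> \<in> A' j} = emeasure (distr M lborel X) Bs"
      using Bb mX by (subst emeasure_distr) (auto simp: Bmem intro: arg_cong[where f="emeasure M"])
    also have "\<dots> = emeasure (density lborel (\<lambda>x. ennreal (mvn_density \<Sigma> x))) Bs"
      using distributed_distr_eq_density[OF gauss] by simp
    also have "\<dots> = (\<integral>\<^sup>+x. ennreal (mvn_density \<Sigma> x) * indicator Bs x \<partial>lborel)"
      using Bb by (intro emeasure_density) simp_all
    also have "\<dots> = (\<integral>\<^sup>+x. ennreal (mvn_density \<Sigma> x) * indicator Bs x \<partial>distr lborel borel U)"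
      by (simp add: dU)
    also have "\<dots> = (\<integral>\<^sup>+w. ennreal (mvn_density \<Sigma> (U w)) * indicator Bs (U w) \<partial>lborel)"
      using Bb by (subst nn_integral_distr) simp_all
    also have "\<dots> = (\<integral>\<^sup>+w. ennreal K * (\<Prod>j\<in>I. H j (w \<bullet> \<beta> j)) \<partial>lborel)"
    proof (intro nn_integral_cong)
      fix w :: "real^'n"
      have ind: "indicator Bs (U w) = (\<Prod>j\<in>I. indicator (A' j) (w \<bullet> \<beta> j) :: ennreal)"
      proof (cases "U w \<in> Bs")
        case True
        then have "\<forall>j\<in>I. w \<bullet> \<beta> j \<in> A' j" by (simp add: Bmem Uv)
        then show ?thesis using True by simp
      next
        case False
        then obtain j where "j \<in> I" "w \<bullet> \<beta> j \<notin> A' j" by (auto simp: Bmem Uv)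
        then show ?thesis using False finI by (auto intro!: prod_zero bexI[of _ j])
      qed
      have "ennreal (mvn_density \<Sigma> (U w)) = ennreal K * (\<Prod>j\<in>I. ennreal (\<phi> j (w \<bullet> \<beta> j)))"
        unfolding fU by (simp add: ennreal_mult'' prod_nonneg \<phi>_def prod_ennreal)
      then show "ennreal (mvn_density \<Sigma> (U w)) * indicator Bs (U w) = ennreal K * (\<Prod>j\<in>I. H j (w \<bullet> \<beta> j))"
        by (simp add: ind H_def prod.distrib mult.assoc)
    qed
    also have "\<dots> = ennreal K * (\<integral>\<^sup>+w. (\<Prod>j\<in>I. H j (w \<bullet> \<beta> j)) \<partial>lborel)"
    proof (rule nn_integral_cmult)
      show "(\<lambda>w. \<Prod>j\<in>I. H j (w \<bullet> \<beta> j)) \<in> borel_measurable lborel"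
        by (simp, intro borel_measurable_prod_ennreal measurable_compose[OF _ mH]) simp_all
    qed
    also have "(\<lambda>w. \<Prod>j\<in>I. H j (w \<bullet> \<beta> j)) = (\<lambda>w. \<Prod>b\<in>Basis. H (\<gamma> b) (w \<bullet> b))"
    proof
      fix w :: "real^'n"
      have "(\<Prod>b\<in>Basis. H (\<gamma> b) (w \<bullet> b)) = (\<Prod>j\<in>I. H (\<gamma> (\<beta> j)) (w \<bullet> \<beta> j))"
        using prod.reindex_bij_betw[OF \<beta>, of "\<lambda>b. H (\<gamma> b) (w \<bullet> b)"] by simp
      also have "\<dots> = (\<Prod>j\<in>I. H j (w \<bullet> \<beta> j))" by (intro prod.cong) (simp_all add: \<gamma>\<beta>)
      finally show "(\<Prod>j\<in>I. H j (w \<bullet> \<beta> j)) = (\<Prod>b\<in>Basis. H (\<gamma> b) (w \<bullet> b))" by simp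
    qed
    also have "(\<integral>\<^sup>+w. (\<Prod>b\<in>Basis. H (\<gamma> b) (w \<bullet> b)) \<partial>lborel) = (\<Prod>b\<in>Basis. (\<integral>\<^sup>+t. H (\<gamma> b) t \<partial>lborel))"
      by (rule nn_integral_lborel_prod) (simp_all add: mH \<gamma>I)
    also have "\<dots> = (\<Prod>j\<in>I. (\<integral>\<^sup>+t. H j t \<partial>lborel))"
      using prod.reindex_bij_betw[OF \<beta>, of "\<lambda>b. (\<integral>\<^sup>+t. H (\<gamma> b) t \<partial>lborel)"] by (simp add: \<gamma>\<beta> cong: prod.cong)
    also have "\<dots> = (\<Prod>j\<in>I. emeasure (density lborel (\<lambda>t. ennreal (\<phi> j t))) (A' j))"
    proof (intro prod.cong refl)
      fix j assume "j \<in> I"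
      then show "(\<integral>\<^sup>+t. H j t \<partial>lborel) = emeasure (density lborel (\<lambda>t. ennreal (\<phi> j t))) (A' j)"
        unfolding H_def by (subst emeasure_density) (simp_all add: \<phi>_def A'b)
    qed
    finally show ?thesis .
  qed
  have K1: "ennreal K = 1"
  proof -
    have "1 = emeasure M {\<omega> \<in> space M. \<forall>j\<in>I. v j \<bullet> X \<omega> \<in> (UNIV :: real set)}"
      using prob_space.emeasure_space_1[OF P] by simp
    also have "\<dots> = ennreal K * (\<Prod>j\<in>I. emeasure (density lborel (\<lambda>t. ennreal (\<phi> j t))) UNIV)"
      by (rule GF) simp
    also have "(\<Prod>j\<in>I. emeasure (density lborel (\<lambda>t. ennreal (\<phi> j t))) UNIV) = 1"
    proof (intro prod.neutral ballI)
      fix j assume "j \<in> I"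
      then have "prob_space (density lborel (\<lambda>t. ennreal (\<phi> j t)))"
        unfolding \<phi>_def by (intro prob_space_normal_density) (simp add: lampos)
      from prob_space.emeasure_space_1[OF this]
      show "emeasure (density lborel (\<lambda>t. ennreal (\<phi> j t))) UNIV = 1" by simp
    qed
    finally show ?thesis by simp
  qed
  show ?thesis using GF[of A] Ab K1 by (simp add: I_def \<phi>_def)
qed




locale gsetup =
  fixes M :: "'a measure" and X :: "'a \<Rightarrow> real^'n" and \<Sigma> :: "real^'n^'n"
    and lam :: "nat \<Rightarrow> real" and v :: "nat \<Rightarrow> real^'n"
  assumes P: "prob_space M"
    and posdef: "\<And>x. x \<noteq> 0 \<Longrightarrow> x \<bullet> (\<Sigma> *v x) > 0"
    and gauss: "distributed M lborel X (\<lambda>x. ennreal (mvn_density \<Sigma> x))"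
    and eigen: "\<And>j. j \<in> {1..CARD('n)} \<Longrightarrow> \<Sigma> *v v j = lam j *\<^sub>R v j"
    and orth: "\<And>j k. j \<in> {1..CARD('n)} \<Longrightarrow> k \<in> {1..CARD('n)} \<Longrightarrow> v j \<bullet> v k = (if j = k then 1 else 0)"
    and pos: "\<And>j. j \<in> {1..CARD('n)} \<Longrightarrow> lam j > 0"
begin

definition "N i = density lborel (\<lambda>t. ennreal (normal_density 0 (sqrt (lam i)) t))"

lemma N1: "i \<in> {1..CARD('n)} \<Longrightarrow> emeasure (N i) UNIV = 1"
proof -
  assume "i \<in> {1..CARD('n)}"
  then have "prob_space (N i)" unfolding N_def by (intro prob_space_normal_density) (simp add: pos)
  from prob_space.emeasure_space_1[OF this] show ?thesis by (simp add: N_def)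
qed

lemma master': 
  assumes "\<And>j. j \<in> {1..CARD('n)} \<Longrightarrow> A j \<in> sets borel"
  shows "emeasure M {\<omega> \<in> space M. \<forall>j\<in>{1..CARD('n)}. v j \<bullet> X \<omega> \<in> A j} = (\<Prod>j\<in>{1..CARD('n)}. emeasure (N j) (A j))"
  unfolding N_def by (rule master[OF P posdef gauss eigen orth pos assms])

lemma mX[measurable]: "X \<in> borel_measurable M"
  using distributed_measurable[OF gauss] by simp

lemma mY[measurable]: "(\<lambda>\<omega>. v j \<bullet> X \<omega>) \<in> borel_measurable M"
  by measurable

lemma marg_emeasure:
  assumes k: "k \<in> {1..CARD('n)}" and A: "A \<in> sets borel"
  shows "emeasure M {\<omega> \<in> space M. v k \<bullet> X \<omega> \<in> A} = emeasure (N k) A"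
proof -
  let ?I = "{1..CARD('n)}"
  define A' where "A' i = (if i = k then A else UNIV)" for i
  have "{\<omega> \<in> space M. v k \<bullet> X \<omega> \<in> A} = {\<omega> \<in> space M. \<forall>j\<in>?I. v j \<bullet> X \<omega> \<in> A' j}"
    using k by (auto simp: A'_def)
  also have "emeasure M \<dots> = (\<Prod>j\<in>?I. emeasure (N j) (A' j))"
    by (rule master') (simp add: A'_def A)
  also have "\<dots> = (\<Prod>j\<in>{k}. emeasure (N j) (A' j))"
    using k by (intro prod.mono_neutral_right) (auto simp: A'_def N1)
  also have "\<dots> = emeasure (N k) A" by (simp add: A'_def)
  finally show ?thesis .
qed

lemma pair_emeasure:
  assumes j: "j \<in> {1..CARD('n)}" and k: "k \<in> {1..CARD('n)}" and jk: "j \<noteq> k"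
    and A: "A \<in> sets borel" and B: "B \<in> sets borel"
  shows "emeasure M {\<omega> \<in> space M. v j \<bullet> X \<omega> \<in> A \<and> v k \<bullet> X \<omega> \<in> B} = emeasure (N j) A * emeasure (N k) B"
proof -
  let ?I = "{1..CARD('n)}"
  define A' where "A' i = (if i = j then A else if i = k then B else UNIV)" for i
  have "{\<omega> \<in> space M. v j \<bullet> X \<omega> \<in> A \<and> v k \<bullet> X \<omega> \<in> B} = {\<omega> \<in> space M. \<forall>i\<in>?I. v i \<bullet> X \<omega> \<in> A' i}"
    using j k jk by (auto simp: A'_def)
  also have "emeasure M \<dots> = (\<Prod>i\<in>?I. emeasure (N i) (A' i))"
    by (rule master') (simp add: A'_def A B)
  also have "\<dots> = (\<Prod>i\<in>{j,k}. emeasure (N i) (A' i))"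
    using j k by (intro prod.mono_neutral_right) (auto simp: A'_def N1)
  also have "\<dots> = emeasure (N j) A * emeasure (N k) B" using jk by (simp add: A'_def)
  finally show ?thesis .
qed

lemma marg:
  assumes k: "k \<in> {1..CARD('n)}"
  shows "distributed M lborel (\<lambda>\<omega>. v k \<bullet> X \<omega>) (\<lambda>t. ennreal (normal_density 0 (sqrt (lam k)) t))"
  unfolding distributed_def
proof (intro conjI)
  show "distr M lborel (\<lambda>\<omega>. v k \<bullet> X \<omega>) = density lborel (\<lambda>t. ennreal (normal_density 0 (sqrt (lam k)) t))"
  proof (rule measure_eqI)
    fix A assume "A \<in> sets (distr M lborel (\<lambda>\<omega>. v k \<bullet> X \<omega>))"
    then have A: "A \<in> sets borel" by simp
    have "emeasure (distr M lborel (\<lambda>\<omega>. v k \<bullet> X \<omega>)) A = emeasure M {\<omega> \<in> space M. v k \<bullet> X \<omega> \<in> A}"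
      using A by (subst emeasure_distr) (auto intro: arg_cong[where f="emeasure M"])
    also have "\<dots> = emeasure (N k) A" by (rule marg_emeasure[OF k A])
    finally show "emeasure (distr M lborel (\<lambda>\<omega>. v k \<bullet> X \<omega>)) A = emeasure (density lborel (\<lambda>t. ennreal (normal_density 0 (sqrt (lam k)) t))) A"
      by (simp add: N_def)
  qed simp
qed simp_all

lemma indep:
  assumes j: "j \<in> {1..CARD('n)}" and k: "k \<in> {1..CARD('n)}" and jk: "j \<noteq> k"
  shows "prob_space.indep_var M borel (\<lambda>\<omega>. v j \<bullet> X \<omega>) borel (\<lambda>\<omega>. v k \<bullet> X \<omega>)"
proof -
  interpret prob_space M by (rule P)
  have dj: "distr M borel (\<lambda>\<omega>. v j \<bullet> X \<omega>) = N j"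
    using distributed_distr_eq_density[OF marg[OF j]] distr_cong[of M M borel lborel "\<lambda>\<omega>. v j \<bullet> X \<omega>" "\<lambda>\<omega>. v j \<bullet> X \<omega>"] by (simp add: N_def)
  have dk: "distr M borel (\<lambda>\<omega>. v k \<bullet> X \<omega>) = N k"
    using distributed_distr_eq_density[OF marg[OF k]] distr_cong[of M M borel lborel "\<lambda>\<omega>. v k \<bullet> X \<omega>" "\<lambda>\<omega>. v k \<bullet> X \<omega>"] by (simp add: N_def)
  have sfj: "sigma_finite_measure (N j)" unfolding N_def
    by (intro prob_space_imp_sigma_finite prob_space_normal_density) (simp add: pos[OF j])
  have sfk: "sigma_finite_measure (N k)" unfolding N_def
    by (intro prob_space_imp_sigma_finite prob_space_normal_density) (simp add: pos[OF k])
  show ?thesis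
    unfolding indep_var_distribution_eq
  proof (intro conjI)
    show "distr M borel (\<lambda>\<omega>. v j \<bullet> X \<omega>) \<Otimes>\<^sub>M distr M borel (\<lambda>\<omega>. v k \<bullet> X \<omega>) =
        distr M (borel \<Otimes>\<^sub>M borel) (\<lambda>x. (v j \<bullet> X x, v k \<bullet> X x))"
      unfolding dj dk
    proof (rule pair_measure_eqI[OF sfj sfk])
      show "sets (N j \<Otimes>\<^sub>M N k) = sets (distr M (borel \<Otimes>\<^sub>M borel) (\<lambda>x. (v j \<bullet> X x, v k \<bullet> X x)))"
        by (simp add: N_def cong: sets_pair_measure_cong)
      fix A B assume "A \<in> sets (N j)" "B \<in> sets (N k)"
      then have A: "A \<in> sets borel" and B: "B \<in> sets borel" by (simp_all add: N_def)
      have "emeasure (distr M (borel \<Otimes>\<^sub>M borel) (\<lambda>x. (v j \<bullet> X x, v k \<bullet> X x))) (A \<times> B)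
          = emeasure M {\<omega> \<in> space M. v j \<bullet> X \<omega> \<in> A \<and> v k \<bullet> X \<omega> \<in> B}"
        using A B by (subst emeasure_distr) (auto intro: arg_cong[where f="emeasure M"])
      also have "\<dots> = emeasure (N j) A * emeasure (N k) B" by (rule pair_emeasure[OF j k jk A B])
      finally show "emeasure (N j) A * emeasure (N k) B = emeasure (distr M (borel \<Otimes>\<^sub>M borel) (\<lambda>x. (v j \<bullet> X x, v k \<bullet> X x))) (A \<times> B)"
        by simp
    qed
  qed simp_all
qed

end




definition SN :: "real measure" where "SN = density lborel (\<lambda>x. ennreal (std_normal_density x))"
definition Phi :: "real \<Rightarrow> real" where "Phi = cdf SN"

lemma SN_prob: "prob_space SN"
  unfolding SN_def by (rule prob_space_normal_density) simp

lemma SN_rd: "real_distribution SN"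
  unfolding real_distribution_def real_distribution_axioms_def using SN_prob by (simp add: SN_def)

lemma sets_SN[simp, measurable_cong]: "sets SN = sets borel" by (simp add: SN_def)
lemma space_SN[simp]: "space SN = UNIV" by (simp add: SN_def)

lemma emeasure_SN: "A \<in> sets borel \<Longrightarrow> emeasure SN A = (\<integral>\<^sup>+x. ennreal (std_normal_density x) * indicator A x \<partial>lborel)"
  unfolding SN_def by (subst emeasure_density) simp_all

lemma SN_singleton: "measure SN {x} = 0"
proof -
  have "emeasure SN {x} = (\<integral>\<^sup>+t. ennreal (std_normal_density t) * indicator {x} t \<partial>lborel)"
    by (simp add: emeasure_SN)
  also have "\<dots> = 0"
  proof (subst nn_integral_0_iff_AE)
    show "AE t in lborel. ennreal (std_normal_density t) * indicator {x} t = 0"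
      using AE_lborel_singleton[of x] by eventually_elim simp
  qed simp
  finally show ?thesis by (simp add: measure_def)
qed

lemma Phi_cont: "isCont Phi x"
proof -
  interpret real_distribution SN by (rule SN_rd)
  show ?thesis unfolding Phi_def using isCont_cdf SN_singleton by simp
qed

lemma Phi_strict:
  assumes "x < y" shows "Phi x < Phi y"
proof -
  interpret real_distribution SN by (rule SN_rd)
  have "emeasure SN {x<..y} \<noteq> 0"
  proof
    assume "emeasure SN {x<..y} = 0"
    then have "(\<integral>\<^sup>+t. ennreal (std_normal_density t) * indicator {x<..y} t \<partial>lborel) = 0"
      by (simp add: emeasure_SN)
    then have "AE t in lborel. ennreal (std_normal_density t) * indicator {x<..y} t = 0"
      by (subst (asm) nn_integral_0_iff_AE) simp_all
    then have "AE t in lborel. t \<notin> {x<..y}"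
    proof eventually_elim
      case (elim t)
      have "std_normal_density t > 0" by (simp add: normal_density_pos)
      then show ?case using elim by (auto simp: indicator_def split: if_splits)
    qed
    then obtain Nn where Nn: "{t \<in> space lborel. \<not> t \<notin> {x<..y}} \<subseteq> Nn" "emeasure lborel Nn = 0" "Nn \<in> sets lborel"
      by (auto elim!: AE_E)
    have "emeasure lborel {x<..y} \<le> emeasure lborel Nn" using Nn by (intro emeasure_mono) auto
    then show False using Nn assms by simp
  qed
  then have "measure SN {x<..y} > 0"
    by (simp add: emeasure_eq_measure zero_less_measure_iff)
  then show ?thesis using cdf_diff_eq[OF assms] by (simp add: Phi_def)
qed

lemma Phi_mono_iff: "Phi x \<le> Phi y \<longleftrightarrow> x \<le> y"
proof
  assume a: "Phi x \<le> Phi y"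
  show "x \<le> y"
  proof (rule ccontr)
    assume "\<not> x \<le> y"
    then have "Phi y < Phi x" by (intro Phi_strict) simp
    with a show False by simp
  qed
next
  assume "x \<le> y" then show "Phi x \<le> Phi y"
    using Phi_strict[of x y] by (cases "x = y") auto
qed

lemma Phi_sym: "Phi (- x) = 1 - Phi x"
proof -
  interpret real_distribution SN by (rule SN_rd)
  have "emeasure SN {..-x} = (\<integral>\<^sup>+t. ennreal (std_normal_density t) * indicator {..-x} t \<partial>lborel)"
    by (simp add: emeasure_SN)
  also have "\<dots> = (\<integral>\<^sup>+t. ennreal (std_normal_density (0 + (-1) * t)) * indicator {..-x} (0 + (-1) * t) \<partial>lborel)"
    by (subst nn_integral_real_affine[where c="-1" and t=0]) simp_all
  also have "\<dots> = (\<integral>\<^sup>+t. ennreal (std_normal_density t) * indicator {x..} t \<partial>lborel)"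
    by (intro nn_integral_cong) (simp add: normal_density_def indicator_def)
  also have "\<dots> = emeasure SN {x..}" by (simp add: emeasure_SN)
  finally have "measure SN {..-x} = measure SN {x..}" by (simp add: measure_def)
  moreover have "measure SN {x..} = 1 - measure SN {..<x}"
    using prob_compl[of "{..<x}"] by (simp add: Compl_eq_Diff_UNIV[symmetric] not_less atLeast_def lessThan_def Collect_neg_eq[symmetric])
  moreover have "measure SN {..x} = measure SN {..<x} + measure SN {x}"
    by (subst finite_measure_Union[symmetric]) (auto intro: arg_cong[where f="measure SN"])
  ultimately show ?thesis using SN_singleton by (simp add: Phi_def cdf_def)
qed

lemma Phi_surj:
  assumes "0 < p" "p < 1" shows "\<exists>q. Phi q = p"
proof -
  interpret real_distribution SN by (rule SN_rd)
  have "eventually (\<lambda>x. Phi x > p) at_top"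
    unfolding Phi_def using order_tendstoD(1)[OF cdf_lim_at_top_prob] assms by blast
  then obtain b where b: "Phi b > p" by (auto simp: eventually_at_top_linorder)
  have "eventually (\<lambda>x. Phi x < p) at_bot"
    unfolding Phi_def using order_tendstoD(2)[OF cdf_lim_at_bot] assms by blast
  then obtain a0 where a0: "\<And>x. x \<le> a0 \<Longrightarrow> Phi x < p" by (auto simp: eventually_at_bot_linorder)
  define a where "a = min a0 b"
  have a: "Phi a < p" "a \<le> b" using a0[of a] by (auto simp: a_def)
  show ?thesis using IVT[of Phi a p b] a b Phi_cont by auto
qed




lemma SN_integrable_iff:
  assumes [measurable]: "f \<in> borel_measurable borel"
  shows "integrable SN f \<longleftrightarrow> integrable lborel (\<lambda>x. std_normal_density x * f x)"
  unfolding SN_def by (subst integrable_density) simp_all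

lemma SN_integral:
  assumes [measurable]: "f \<in> borel_measurable borel"
  shows "integral\<^sup>L SN f = (\<integral>x. std_normal_density x * f x \<partial>lborel)"
  unfolding SN_def by (subst integral_density) simp_all

lemma SN_int_z2: "integrable SN (\<lambda>z. z * z)"
  using integrable_std_normal_moment[of 2] by (subst SN_integrable_iff) (simp_all add: power2_eq_square)

lemma SN_integral_z2: "(\<integral>z. z * z \<partial>SN) = 1"
  using integral_std_normal_moment_even[of 1] by (subst SN_integral) (simp_all add: power2_eq_square)

lemma SN_int_z: "integrable SN (\<lambda>z. z)"
  using integrable_std_normal_moment[of 1] by (subst SN_integrable_iff) simp_all

lemma trunc_var_le1:
  fixes T :: real
  defines "J \<equiv> {-T..T}"
  defines "P0 \<equiv> measure SN J"
  defines "m1 \<equiv> (\<integral>z. indicator J z * z \<partial>SN)"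
  assumes P0: "P0 > 0"
  shows "(\<integral>z. indicator J z * ((z - m1 / P0) * (z - m1 / P0)) \<partial>SN) / P0 \<le> 1"
proof -
  interpret prob_space SN by (rule SN_prob)
  have Jb[measurable]: "J \<in> sets borel" by (simp add: J_def)
  have "J \<noteq> {}" using P0 by (auto simp: P0_def)
  then have T0: "T \<ge> 0" by (auto simp: J_def)
  define a where "a = (\<integral>z. indicator J z * (z * z) \<partial>SN)"
  have iz2: "integrable SN (\<lambda>z. indicator J z * (z * z))"
    using integrable_real_mult_indicator[OF _ SN_int_z2, of J] by (simp add: mult.commute)
  have iz: "integrable SN (\<lambda>z. indicator J z * z)"
    using integrable_real_mult_indicator[OF _ SN_int_z, of J] by (simp add: mult.commute)
  have iI: "integrable SN (\<lambda>z. indicator J z :: real)"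
    using integrable_real_mult_indicator[OF _ integrable_const[of 1], of J] by simp
  have intI: "(\<integral>z. indicator J z \<partial>SN) = P0" by (simp add: P0_def)
  define m where "m = m1 / P0"
  have "(\<integral>z. indicator J z * ((z - m) * (z - m)) \<partial>SN)
      = (\<integral>z. indicator J z * (z * z) - (2 * m) * (indicator J z * z) + (m * m) * indicator J z \<partial>SN)"
    by (intro Bochner_Integration.integral_cong) (simp_all add: algebra_simps)
  also have "\<dots> = a - 2 * m * m1 + m * m * P0"
    using iz2 iz iI by (simp add: a_def m1_def intI P0_def)
  also have "\<dots> = a - m1 * m1 / P0" using P0 by (simp add: m_def field_simps)
  finally have eq: "(\<integral>z. indicator J z * ((z - m) * (z - m)) \<partial>SN) = a - m1 * m1 / P0" .
  have h1: "a \<le> T * T * P0"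
  proof -
    have "a \<le> (\<integral>z. indicator J z * (T * T) \<partial>SN)"
      unfolding a_def
    proof (rule integral_mono)
      show "integrable SN (\<lambda>z. indicator J z * (T * T))" using iI by simp
      fix z show "indicator J z * (z * z) \<le> indicator J z * (T * T)"
      proof (cases "z \<in> J")
        case True then have "\<bar>z\<bar> \<le> T" by (auto simp: J_def)
        then have "z * z \<le> T * T" using abs_le_square_iff[of z T] T0 by (simp add: power2_eq_square)
        then show ?thesis using True by simp
      qed simp
    qed (rule iz2)
    also have "\<dots> = T * T * P0" using intI by simp
    finally show ?thesis .
  qed
  have h2: "T * T * (1 - P0) \<le> 1 - a"
  proof -
    have "T * T * (1 - P0) = (\<integral>z. (1 - indicator J z) * (T * T) \<partial>SN)"
      using iI intI prob_space by (simp add: left_diff_distrib algebra_simps)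
    also have "\<dots> \<le> (\<integral>z. (1 - indicator J z) * (z * z) \<partial>SN)"
    proof (rule integral_mono)
      show "integrable SN (\<lambda>z. (1 - indicator J z) * (T * T))" using iI by (simp add: left_diff_distrib)
      show "integrable SN (\<lambda>z. (1 - indicator J z) * (z * z))" using iz2 SN_int_z2 by (simp add: left_diff_distrib)
      fix z show "(1 - indicator J z) * (T * T) \<le> (1 - indicator J z) * (z * z)"
      proof (cases "z \<in> J")
        case False then have "T \<le> \<bar>z\<bar>" by (auto simp: J_def)
        then have "T * T \<le> z * z" using abs_le_square_iff[of T z] T0 by (simp add: power2_eq_square)
        then show ?thesis using False by simp
      qed simp
    qed
    also have "\<dots> = 1 - a"
      using iz2 SN_int_z2 by (simp add: left_diff_distrib a_def SN_integral_z2)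
    finally show ?thesis .
  qed
  have P01: "P0 \<le> 1" by (simp add: P0_def)
  have "a * (1 - P0) \<le> T * T * P0 * (1 - P0)" using h1 P01 by (intro mult_right_mono) simp_all
  moreover have "T * T * (1 - P0) * P0 \<le> (1 - a) * P0" using h2 P0 by (intro mult_right_mono) simp_all
  ultimately have "a \<le> P0" by (simp add: algebra_simps)
  then have "a / P0 \<le> 1" using P0 by simp
  moreover have "(a - m1 * m1 / P0) / P0 \<le> a / P0"
    using P0 by (intro divide_right_mono) simp_all
  ultimately show ?thesis using eq by (simp add: m_def)
qed




lemma (in prob_space) std_transfer:
  fixes g :: "real \<Rightarrow> real"
  assumes Zd: "distributed M lborel Z (\<lambda>x. ennreal (std_normal_density x))"
  shows std_transfer_integral: "g \<in> borel_measurable borel \<Longrightarrow> (\<integral>\<omega>. g (Z \<omega>) \<partial>M) = integral\<^sup>L SN g"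
    and std_transfer_integrable: "g \<in> borel_measurable borel \<Longrightarrow> integrable M (\<lambda>\<omega>. g (Z \<omega>)) \<longleftrightarrow> integrable SN g"
    and std_transfer_measure: "B \<in> sets borel \<Longrightarrow> measure M {\<omega> \<in> space M. Z \<omega> \<in> B} = measure SN B"
proof -
  have d: "distr M lborel Z = SN" using distributed_distr_eq_density[OF Zd] by (simp add: SN_def)
  have mZ: "Z \<in> measurable M lborel" using distributed_measurable[OF Zd] .
  show "g \<in> borel_measurable borel \<Longrightarrow> (\<integral>\<omega>. g (Z \<omega>) \<partial>M) = integral\<^sup>L SN g"
    using integral_distr[OF mZ, of g] d by simp
  show "g \<in> borel_measurable borel \<Longrightarrow> integrable M (\<lambda>\<omega>. g (Z \<omega>)) \<longleftrightarrow> integrable SN g"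
    using integrable_distr_eq[OF mZ, of g] d by simp
  assume B: "B \<in> sets borel"
  have "measure SN B = measure M (Z -` B \<inter> space M)"
    using measure_distr[OF mZ, of B] d B by simp
  also have "Z -` B \<inter> space M = {\<omega> \<in> space M. Z \<omega> \<in> B}" by auto
  finally show "measure M {\<omega> \<in> space M. Z \<omega> \<in> B} = measure SN B" by simp
qed

lemma SN_int_ind: "J \<in> sets borel \<Longrightarrow> integrable SN (\<lambda>z. indicator J z :: real)"
proof -
  assume J: "J \<in> sets borel"
  interpret prob_space SN by (rule SN_prob)
  show ?thesis using integrable_real_mult_indicator[OF _ integrable_const[of 1], of J] J by simp
qed

lemma quantile_scaled:
  assumes s: "s > 0" and cdf: "\<And>x. measure M {\<omega> \<in> space M. W \<omega> \<le> x} = Phi (x / s)" and q: "Phi q = p"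
  shows "quantile M W p = s * q"
proof -
  have "{x. p \<le> measure M {\<omega> \<in> space M. W \<omega> \<le> x}} = {s * q..}"
  proof -
    have "p \<le> measure M {\<omega> \<in> space M. W \<omega> \<le> x} \<longleftrightarrow> s * q \<le> x" for x
      using s by (simp add: cdf q[symmetric] Phi_mono_iff pos_le_divide_eq mult.commute)
    then show ?thesis by auto
  qed
  then show ?thesis unfolding quantile_def by simp
qed




theorem theorem5:
  fixes M :: "'a measure"
    and X :: "'a \<Rightarrow> real^'n"
    and \<Sigma> :: "real^'n^'n"
    and lam :: "nat \<Rightarrow> real"
    and v :: "nat \<Rightarrow> real^'n"
    and \<alpha> :: real
    and i :: nat
  defines "d \<equiv> CARD('n)"
  defines "Y \<equiv> (\<lambda>j \<omega>. v j \<bullet> X \<omega>)"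
  defines "\<Lambda> \<equiv> (\<lambda>k. cond_cov_matrix M {\<omega> \<in> space M. Y k \<omega> \<in> central_interval M (Y k) \<alpha>} Y)"
  assumes "prob_space M"
    and sym: "transpose \<Sigma> = \<Sigma>"
    and posdef: "\<And>x. x \<noteq> 0 \<Longrightarrow> x \<bullet> (\<Sigma> *v x) > 0"
    and gauss: "distributed M lborel X (\<lambda>x. ennreal (mvn_density \<Sigma> x))"
    and eigen: "\<And>j. j \<in> {1..d} \<Longrightarrow> \<Sigma> *v v j = lam j *\<^sub>R v j"
    and orthonormal: "\<And>j k. j \<in> {1..d} \<Longrightarrow> k \<in> {1..d} \<Longrightarrow> v j \<bullet> v k = (if j = k then 1 else 0)"
    and ordered: "\<And>j k. j \<in> {1..d} \<Longrightarrow> k \<in> {1..d} \<Longrightarrow> j \<le> k \<Longrightarrow> lam k \<le> lam j"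
    and "lam d > 0"
    and "0 < \<alpha>" "\<alpha> < 1"
    and "i \<in> {1..d}"
  shows "mat_trace d (\<Lambda> 1) \<le> mat_trace d (\<Lambda> i) \<and> mat_trace d (\<Lambda> i) \<le> mat_trace d (\<Lambda> d)"
proof -
  note P = \<open>prob_space M\<close>
  interpret prob_space M by (rule P)
  let ?I = "{1..d}"
  have d1: "1 \<le> d" unfolding d_def using finite_UNIV_card_ge_0[where 'a='n] by simp
  have dI: "d \<in> ?I" "1 \<in> ?I" using d1 by auto
  have pos: "lam j > 0" if "j \<in> ?I" for j
    using ordered[OF that dI(1)] that \<open>lam d > 0\<close> by auto
  have "gsetup M X \<Sigma> lam v"
    unfolding gsetup_def d_def[symmetric] using P posdef gauss eigen orthonormal pos by blast
  then interpret G: gsetup M X \<Sigma> lam v .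
  define s where "s j = sqrt (lam j)" for j
  define Z where "Z j \<omega> = Y j \<omega> / s j" for j \<omega>
  have spos: "s j > 0" if "j \<in> ?I" for j using pos[OF that] by (simp add: s_def)
  have Yeq: "Y j \<omega> = s j * Z j \<omega>" if "j \<in> ?I" for j \<omega> using spos[OF that] by (simp add: Z_def)
  have sq: "s j * s j = lam j" if "j \<in> ?I" for j using pos[OF that] by (simp add: s_def)
  have Zd: "distributed M lborel (Z j) (\<lambda>x. ennreal (std_normal_density x))" if "j \<in> ?I" for j
  proof -
    have "distributed M lborel (Y j) (\<lambda>t. ennreal (normal_density 0 (s j) t))"
      using G.marg[of j] that by (simp add: Y_def s_def d_def)
    then show ?thesis
      using normal_standard_normal_convert[of "s j" "Y j" 0] spos[OF that]
      by (simp add: Z_def[abs_def])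
  qed
  have mYj[measurable]: "Y j \<in> borel_measurable M" for j unfolding Y_def by simp
  have mZj[measurable]: "Z j \<in> borel_measurable M" for j unfolding Z_def[abs_def] by simp
  have cdfY: "measure M {\<omega> \<in> space M. Y j \<omega> \<le> x} = Phi (x / s j)" if "j \<in> ?I" for j x
  proof -
    have "{\<omega> \<in> space M. Y j \<omega> \<le> x} = {\<omega> \<in> space M. Z j \<omega> \<in> {..x / s j}}"
      using spos[OF that] by (auto simp: Yeq[OF that] pos_le_divide_eq mult.commute)
    then show ?thesis
      using std_transfer_measure[OF Zd[OF that], of "{..x / s j}"] by (simp add: Phi_def cdf_def)
  qed
  obtain q1 where q1: "Phi q1 = \<alpha> / 2" using Phi_surj[of "\<alpha> / 2"] \<open>0 < \<alpha>\<close> \<open>\<alpha> < 1\<close> by auto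
  obtain q2 where q2: "Phi q2 = 1 - \<alpha> / 2" using Phi_surj[of "1 - \<alpha> / 2"] \<open>0 < \<alpha>\<close> \<open>\<alpha> < 1\<close> by auto
  have q12: "q1 = - q2"
  proof -
    have "Phi (- q2) = Phi q1" using q1 q2 by (simp add: Phi_sym)
    then show ?thesis by (metis Phi_mono_iff order_antisym order_refl)
  qed
  have CI: "central_interval M (Y j) \<alpha> = {s j * q1 .. s j * q2}" if "j \<in> ?I" for j
    unfolding central_interval_def
    using quantile_scaled[OF spos[OF that] cdfY[OF that] q1] quantile_scaled[OF spos[OF that] cdfY[OF that] q2]
    by simp
  define J where "J = {-q2..q2}"
  have Jb[measurable]: "J \<in> sets borel" by (simp add: J_def)
  define A where "A k = {\<omega> \<in> space M. Y k \<omega> \<in> central_interval M (Y k) \<alpha>}" for k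
  have Aeq: "A k = {\<omega> \<in> space M. Z k \<omega> \<in> J}" if "k \<in> ?I" for k
  proof -
    have aux: "(-(s k * q2) \<le> s k * z) \<longleftrightarrow> (-q2 \<le> z)" "(s k * z \<le> s k * q2) \<longleftrightarrow> (z \<le> q2)" for z
      using spos[OF that] by (metis minus_mult_right mult_le_cancel_left_pos)+
    show ?thesis by (auto simp: A_def CI[OF that] J_def q12 Yeq[OF that] aux)
  qed
  define P0 where "P0 = measure SN J"
  have PA: "measure M (A k) = P0" if "k \<in> ?I" for k
    using std_transfer_measure[OF Zd[OF that] Jb] by (simp add: Aeq[OF that] P0_def)
  have indA: "indicator (A k) \<omega> = (indicator J (Z k \<omega>) :: real)" if "k \<in> ?I" "\<omega> \<in> space M" for k \<omega>
    using that by (simp add: Aeq indicator_def)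
  define m1 where "m1 = (\<integral>z. indicator J z * z \<partial>SN)"
  define c where "c = (\<integral>z. indicator J z * ((z - m1 / P0) * (z - m1 / P0)) \<partial>SN) / P0"
  have cle: "c \<le> 1" if "P0 > 0"
    using trunc_var_le1[of q2] that by (simp add: c_def m1_def P0_def J_def)
  have SNi_z: "(\<integral>z. z \<partial>SN) = 0"
    using integral_std_normal_moment_odd[of 0] by (subst SN_integral) simp_all
  have diag: "cond_cov M (A k) (Y k) (Y k) = lam k * c" if k: "k \<in> ?I" for k
  proof -
    have e1: "(\<integral>\<omega>. indicator (A k) \<omega> * Y k \<omega> \<partial>M) = s k * m1"
    proof -
      have "(\<integral>\<omega>. indicator (A k) \<omega> * Y k \<omega> \<partial>M) = (\<integral>\<omega>. (\<lambda>z. s k * (indicator J z * z)) (Z k \<omega>) \<partial>M)"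
        by (intro Bochner_Integration.integral_cong) (simp_all add: indA[OF k] Yeq[OF k])
      also have "\<dots> = (\<integral>z. s k * (indicator J z * z) \<partial>SN)"
        by (rule std_transfer_integral[OF Zd[OF k]]) simp
      also have "\<dots> = s k * m1" by (simp add: m1_def)
      finally show ?thesis .
    qed
    have mu: "cond_expect M (A k) (Y k) = s k * m1 / P0"
      by (simp add: cond_expect_def e1 PA[OF k])
    have e2: "(\<integral>\<omega>. indicator (A k) \<omega> * ((Y k \<omega> - s k * m1 / P0) * (Y k \<omega> - s k * m1 / P0)) \<partial>M)
        = lam k * (\<integral>z. indicator J z * ((z - m1 / P0) * (z - m1 / P0)) \<partial>SN)"
    proof -
      have "(\<integral>\<omega>. indicator (A k) \<omega> * ((Y k \<omega> - s k * m1 / P0) * (Y k \<omega> - s k * m1 / P0)) \<partial>M)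
          = (\<integral>\<omega>. (\<lambda>z. lam k * (indicator J z * ((z - m1 / P0) * (z - m1 / P0)))) (Z k \<omega>) \<partial>M)"
      proof (intro Bochner_Integration.integral_cong refl)
        fix \<omega> assume "\<omega> \<in> space M"
        then show "indicator (A k) \<omega> * ((Y k \<omega> - s k * m1 / P0) * (Y k \<omega> - s k * m1 / P0))
          = (\<lambda>z. lam k * (indicator J z * ((z - m1 / P0) * (z - m1 / P0)))) (Z k \<omega>)"
          by (simp add: indA[OF k] Yeq[OF k] sq[OF k, symmetric] algebra_simps)
      qed
      also have "\<dots> = (\<integral>z. lam k * (indicator J z * ((z - m1 / P0) * (z - m1 / P0))) \<partial>SN)"
        by (rule std_transfer_integral[OF Zd[OF k]]) simp
      also have "\<dots> = lam k * (\<integral>z. indicator J z * ((z - m1 / P0) * (z - m1 / P0)) \<partial>SN)" by simp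
      finally show ?thesis .
    qed
    show ?thesis
      unfolding cond_cov_def mu by (simp add: cond_expect_def e2 PA[OF k] c_def)
  qed
  have offd: "cond_cov M (A k) (Y j) (Y j) = lam j" if j: "j \<in> ?I" and k: "k \<in> ?I" and jk: "j \<noteq> k" and P0p: "P0 > 0" for j k
  proof -
    have ind: "indep_var borel (Y k) borel (Y j)"
      using G.indep[of k j] j k jk by (simp add: Y_def d_def)
    have mg[measurable]: "(\<lambda>y. indicator J (y / s k) :: real) \<in> borel_measurable borel" by measurable
    have ind1: "indep_var borel (\<lambda>\<omega>. indicator J (Z k \<omega>) :: real) borel (Y j)"
      using indep_var_compose[OF ind mg, of "\<lambda>y. y" borel] by (simp add: o_def Z_def)
    have ind2: "indep_var borel (\<lambda>\<omega>. indicator J (Z k \<omega>) :: real) borel (\<lambda>\<omega>. Y j \<omega> * Y j \<omega>)"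
      using indep_var_compose[OF ind mg, of "\<lambda>y. y * y" borel] by (simp add: o_def Z_def)
    have iJ: "integrable SN (\<lambda>z. indicator J z :: real)" using SN_int_ind[OF Jb] .
    have iI: "integrable M (\<lambda>\<omega>. indicator J (Z k \<omega>) :: real)"
      using std_transfer_integrable[OF Zd[OF k], of "indicator J"] iJ by simp
    have EI: "(\<integral>\<omega>. indicator J (Z k \<omega>) \<partial>M) = P0"
      using std_transfer_integral[OF Zd[OF k], of "indicator J"] by (simp add: P0_def)
    have iY: "integrable M (Y j)"
    proof -
      have h: "integrable SN (\<lambda>z. s j * z)" using SN_int_z by (rule integrable_mult_right)
      have mg: "(\<lambda>z. s j * z) \<in> borel_measurable borel" by measurable
      have "integrable M (\<lambda>\<omega>. s j * Z j \<omega>)" using std_transfer_integrable[OF Zd[OF j] mg] h by blast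
      moreover have "Y j = (\<lambda>\<omega>. s j * Z j \<omega>)" by (rule ext) (rule Yeq[OF j])
      ultimately show ?thesis by simp
    qed
    have iY2: "integrable M (\<lambda>\<omega>. Y j \<omega> * Y j \<omega>)"
    proof -
      have "integrable M (\<lambda>\<omega>. (\<lambda>z. lam j * (z * z)) (Z j \<omega>))"
        using std_transfer_integrable[OF Zd[OF j], of "\<lambda>z. lam j * (z * z)"] SN_int_z2 by simp
      then show ?thesis by (simp add: Yeq[OF j] sq[OF j, symmetric] algebra_simps)
    qed
    have EY: "(\<integral>\<omega>. Y j \<omega> \<partial>M) = 0"
    proof -
      have "(\<integral>\<omega>. Y j \<omega> \<partial>M) = (\<integral>\<omega>. (\<lambda>z. s j * z) (Z j \<omega>) \<partial>M)" by (simp add: Yeq[OF j])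
      also have "\<dots> = (\<integral>z. s j * z \<partial>SN)" by (rule std_transfer_integral[OF Zd[OF j]]) simp
      finally show ?thesis using SNi_z by simp
    qed
    have EY2: "(\<integral>\<omega>. Y j \<omega> * Y j \<omega> \<partial>M) = lam j"
    proof -
      have "(\<integral>\<omega>. Y j \<omega> * Y j \<omega> \<partial>M) = (\<integral>\<omega>. (\<lambda>z. lam j * (z * z)) (Z j \<omega>) \<partial>M)"
        by (simp add: Yeq[OF j] sq[OF j, symmetric] algebra_simps)
      also have "\<dots> = (\<integral>z. lam j * (z * z) \<partial>SN)" by (rule std_transfer_integral[OF Zd[OF j]]) simp
      finally show ?thesis using SN_integral_z2 by simp
    qed
    have e1: "(\<integral>\<omega>. indicator (A k) \<omega> * Y j \<omega> \<partial>M) = 0"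
    proof -
      have "(\<integral>\<omega>. indicator (A k) \<omega> * Y j \<omega> \<partial>M) = (\<integral>\<omega>. indicator J (Z k \<omega>) * Y j \<omega> \<partial>M)"
        by (intro Bochner_Integration.integral_cong) (simp_all add: indA[OF k])
      also have "\<dots> = (\<integral>\<omega>. indicator J (Z k \<omega>) \<partial>M) * (\<integral>\<omega>. Y j \<omega> \<partial>M)"
        by (rule indep_var_lebesgue_integral[OF ind1 iI iY])
      finally show ?thesis using EY by simp
    qed
    have mu: "cond_expect M (A k) (Y j) = 0" by (simp add: cond_expect_def e1)
    have e2: "(\<integral>\<omega>. indicator (A k) \<omega> * (Y j \<omega> * Y j \<omega>) \<partial>M) = P0 * lam j"
    proof -
      have "(\<integral>\<omega>. indicator (A k) \<omega> * (Y j \<omega> * Y j \<omega>) \<partial>M) = (\<integral>\<omega>. indicator J (Z k \<omega>) * (Y j \<omega> * Y j \<omega>) \<partial>M)"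
        by (intro Bochner_Integration.integral_cong) (simp_all add: indA[OF k])
      also have "\<dots> = (\<integral>\<omega>. indicator J (Z k \<omega>) \<partial>M) * (\<integral>\<omega>. Y j \<omega> * Y j \<omega> \<partial>M)"
        by (rule indep_var_lebesgue_integral[OF ind2 iI iY2])
      finally show ?thesis using EI EY2 by simp
    qed
    show ?thesis
      unfolding cond_cov_def mu using P0p by (simp add: cond_expect_def e2 PA[OF k])
  qed
  have zero: "cond_cov M (A k) f g = 0" if "k \<in> ?I" "P0 = 0" for k f g
    using that by (simp add: cond_cov_def cond_expect_def PA)
  define S where "S = (\<Sum>j\<in>?I. lam j)"
  have tr: "mat_trace d (\<Lambda> k) = (if P0 > 0 then S - lam k * (1 - c) else 0)" if k: "k \<in> ?I" for k
  proof -
    have "mat_trace d (\<Lambda> k) = (\<Sum>j\<in>?I. cond_cov M (A k) (Y j) (Y j))"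
      by (simp add: mat_trace_def \<Lambda>_def cond_cov_matrix_def A_def)
    also have "\<dots> = (if P0 > 0 then S - lam k * (1 - c) else 0)"
    proof (cases "P0 > 0")
      case True
      have "(\<Sum>j\<in>?I. cond_cov M (A k) (Y j) (Y j)) = cond_cov M (A k) (Y k) (Y k) + (\<Sum>j\<in>?I - {k}. cond_cov M (A k) (Y j) (Y j))"
        using k by (subst sum.remove[of _ k]) simp_all
      also have "(\<Sum>j\<in>?I - {k}. cond_cov M (A k) (Y j) (Y j)) = (\<Sum>j\<in>?I - {k}. lam j)"
        using k True by (intro sum.cong) (auto intro: offd)
      also have "S = lam k + (\<Sum>j\<in>?I - {k}. lam j)"
        unfolding S_def using k by (subst sum.remove[of _ k]) simp_all
      ultimately show ?thesis using True diag[OF k] by (simp add: algebra_simps)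
    next
      case False
      have "P0 \<ge> 0" by (simp add: P0_def)
      with False have "P0 = 0" by simp
      then show ?thesis using zero[OF k] by simp
    qed
    finally show ?thesis .
  qed
  show ?thesis
  proof (cases "P0 > 0")
    case True
    have c1: "0 \<le> 1 - c" using cle[OF True] by simp
    have "lam i \<le> lam 1" using ordered[OF dI(2) \<open>i \<in> ?I\<close>] \<open>i \<in> ?I\<close> by simp
    then have a: "lam i * (1 - c) \<le> lam 1 * (1 - c)" using c1 by (rule mult_right_mono)
    have "lam d \<le> lam i" using ordered[OF \<open>i \<in> ?I\<close> dI(1)] \<open>i \<in> ?I\<close> by simp
    then have b: "lam d * (1 - c) \<le> lam i * (1 - c)" using c1 by (rule mult_right_mono)
    show ?thesis using a b True tr[OF dI(2)] tr[OF \<open>i \<in> ?I\<close>] tr[OF dI(1)] by simp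
  next
    case False
    then show ?thesis using tr[OF dI(2)] tr[OF \<open>i \<in> ?I\<close>] tr[OF dI(1)] by simp
  qed
qed


end
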